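(* Let $\alpha\ge1$, $\beta$ odd, and let ${\cal C}=\langle (b\mid 0),(\ell\mid fh+2f)\rangle\subseteq R_{\alpha,\beta}$ be a $\mathbb{Z}_2\mathbb{Z}_4$-additive cyclic code, where $f,h,g\in\mathbb{Z}_4[x]$ with $fhg=x^\beta-1$, $b\in\mathbb{Z}_2[x]$ divides $x^\alpha-1$, and $\ell\in\mathbb{Z}_2[x]/(x^\alpha-1)$. If ${\cal C}_b=\langle (b\mid 0),(0\mid 2f)\rangle$, then $\Phi({\cal C})$ is linear if and only if $\phi({\cal C}_Y)$ is linear.
   Context: $R_{\alpha,\beta}=\mathbb{Z}_2[x]/(x^\alpha-1)\times\mathbb{Z}_4[x]/(x^\beta-1)$, identified with $\mathbb{Z}_2^\alpha\times\mathbb{Z}_4^\beta$ via coefficient vectors; it is a $\mathbb{Z}_4[x]$-module via $p\star(b\mid a)=(\tilde pb\mid pa)$, where $\tilde p$ is the reduction of $p$ mod 2. A $\mathbb{Z}_2\mathbb{Z}_4$-additive cyclic code is a $\mathbb{Z}_4[x]$-submodule of $R_{\alpha,\beta}$, and $\langle\cdot\rangle$ denotes the generated submodule. ${\cal C}_b$ is the subcode of codewords of order at most 2; ${\cal C}_Y$ is the projection onto the last $\beta$ coordinates. Gray map: for $u'\in\mathbb{Z}_4^n$ with $u'_i=\tilde u'_i+2\hat u'_i$, $\tilde u'_i,\hat u'_i\in\{0,1\}$, $\phi(u')=(\hat u'_0,\dots,\hat u'_{n-1},\tilde u'_0+\hat u'_0,\dots,\tilde u'_{n-1}+\hat u'_{n-1})$;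 $\Phi(u\mid u')=(u\mid\phi(u'))$. Linear means a $\mathbb{Z}_2$-subspace. *)

theory Defs
  imports "HOL-Library.Numeral_Type" "HOL-Computational_Algebra.Polynomial"
begin

(* A vector of length n is a function nat => 'a (only indices < n matter;
   all vectors produced below vanish outside {0..<n}). *)

definition red2 :: "4 \<Rightarrow> 2" where
  "red2 x = of_int (Rep_bit0 x)"

(* the "hat" bit: u = tilde u + 2 * hat u with tilde u, hat u in {0,1} *)
definition hat4 :: "4 \<Rightarrow> 2" where
  "hat4 x = of_int (Rep_bit0 x div 2)"

(* coefficient vector of p mod (x^n - 1) *)
definition cred :: "nat \<Rightarrow> 'a::comm_monoid_add poly \<Rightarrow> nat \<Rightarrow> 'a" where
  "cred n p = (\<lambda>i. if i < n then (\<Sum>j\<in>{j. j \<le> degree p \<and> j mod n = i}. coeff p j) else 0)"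

definition vpoly :: "nat \<Rightarrow> (nat \<Rightarrow> 'a::comm_monoid_add) \<Rightarrow> 'a poly" where
  "vpoly n u = (\<Sum>i<n. monom (u i) i)"

type_synonym word = "(nat \<Rightarrow> 2) \<times> (nat \<Rightarrow> 4)"

definition wzero :: word where
  "wzero = ((\<lambda>_. 0), (\<lambda>_. 0))"

definition wadd :: "word \<Rightarrow> word \<Rightarrow> word" where
  "wadd c d = ((\<lambda>i. fst c i + fst d i), (\<lambda>i. snd c i + snd d i))"

(* Z4[x]-module action on R_{alpha,beta}: p * (b | a) = (tilde p b | p a) *)
definition smul :: "nat \<Rightarrow> nat \<Rightarrow> 4 poly \<Rightarrow> word \<Rightarrow> word" where
  "smul \<alpha> \<beta> p c = (cred \<alpha> (map_poly red2 p * vpoly \<alpha> (fst c)),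
                     cred \<beta> (p * vpoly \<beta> (snd c)))"

inductive_set gen :: "nat \<Rightarrow> nat \<Rightarrow> word set \<Rightarrow> word set" for \<alpha> \<beta> S where
  gen_zero: "wzero \<in> gen \<alpha> \<beta> S"
| gen_base: "s \<in> S \<Longrightarrow> s \<in> gen \<alpha> \<beta> S"
| gen_add: "c \<in> gen \<alpha> \<beta> S \<Longrightarrow> d \<in> gen \<alpha> \<beta> S \<Longrightarrow> wadd c d \<in> gen \<alpha> \<beta> S"
| gen_smul: "c \<in> gen \<alpha> \<beta> S \<Longrightarrow> smul \<alpha> \<beta> p c \<in> gen \<alpha> \<beta> S"

definition gray :: "nat \<Rightarrow> (nat \<Rightarrow> 4) \<Rightarrow> nat \<Rightarrow> 2" where
  "gray n v = (\<lambda>i. if i < n then hat4 (v i)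
                   else if i < 2 * n then red2 (v (i - n)) + hat4 (v (i - n))
                   else 0)"

definition Phi :: "nat \<Rightarrow> word \<Rightarrow> (nat \<Rightarrow> 2) \<times> (nat \<Rightarrow> 2)" where
  "Phi \<beta> c = (fst c, gray \<beta> (snd c))"

definition lin2 :: "(nat \<Rightarrow> 2) set \<Rightarrow> bool" where
  "lin2 S \<longleftrightarrow> (\<lambda>_. 0) \<in> S \<and> (\<forall>x\<in>S. \<forall>y\<in>S. (\<lambda>i. x i + y i) \<in> S)"

definition lin2p :: "((nat \<Rightarrow> 2) \<times> (nat \<Rightarrow> 2)) set \<Rightarrow> bool" where
  "lin2p S \<longleftrightarrow> ((\<lambda>_. 0), (\<lambda>_. 0)) \<in> S \<and>
     (\<forall>x\<in>S. \<forall>y\<in>S. ((\<lambda>i. fst x i + fst y i), (\<lambda>i. snd x i + snd y i)) \<in> S)"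

end

theory Submission
  imports Defs
begin

lemma ex4: fixes x :: 4 shows "x = 0 \<or> x = 1 \<or> x = 2 \<or> x = 3"
proof (cases x)
  case (of_int z)
  then have "z = 0 \<or> z = 1 \<or> z = 2 \<or> z = 3" by auto
  then show ?thesis using of_int by auto
qed

lemma rh: "red2 0 = 0" "red2 1 = 1" "red2 2 = 0" "red2 3 = 1" "hat4 0 = 0" "hat4 1 = 0" "hat4 2 = 1" "hat4 3 = 1"
  by (simp_all add: red2_def hat4_def bit0.Rep_0 bit0.Rep_1 bit0.Rep_numeral)

lemma key: fixes a b c :: 4
  assumes "hat4 c = hat4 a + hat4 b" "red2 c + hat4 c = red2 a + hat4 a + red2 b + hat4 b"
  shows "2 * (c + a + a + a + (b + b + b)) = 0"
  using ex4[of a] ex4[of b] ex4[of c] assms by (auto simp: rh)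

lemma two2: fixes x :: 2 shows "x + x = 0"
proof (cases x)
  case (of_int z)
  then have "z = 0 \<or> z = 1" by auto
  then show ?thesis using of_int by auto
qed

lemma four4: "(4::4) = 0" by simp

lemma cred_supp: "i \<ge> n \<Longrightarrow> cred n p i = 0"
  by (simp add: cred_def)

lemma gen_supp:
  assumes "c \<in> gen \<alpha> \<beta> S"
    and "\<forall>s\<in>S. (\<forall>i\<ge>\<alpha>. fst s i = 0) \<and> (\<forall>i\<ge>\<beta>. snd s i = 0)"
  shows "(\<forall>i\<ge>\<alpha>. fst c i = 0) \<and> (\<forall>i\<ge>\<beta>. snd c i = 0)"
  using assms(1)
proof (induction rule: gen.induct)
  case gen_zero then show ?case by (simp add: wzero_def)
next
  case (gen_base s) then show ?case using assms(2) by blast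
next
  case (gen_add c d) then show ?case by (simp add: wadd_def)
next
  case (gen_smul c p) then show ?case by (simp add: smul_def cred_supp)
qed

lemma gen_mono: assumes "S \<subseteq> T" "c \<in> gen \<alpha> \<beta> S" shows "c \<in> gen \<alpha> \<beta> T"
  using assms(2)
proof (induction c rule: gen.induct)
  case gen_zero then show ?case by (rule gen.gen_zero)
next
  case (gen_base s) then show ?case using assms(1) by (blast intro: gen.gen_base)
next
  case (gen_add c d) then show ?case by (blast intro: gen.gen_add)
next
  case (gen_smul c p) then show ?case by (blast intro: gen.gen_smul)
qed

lemma gen_zero_fst:
  assumes "c \<in> gen \<alpha> \<beta> {(x, (\<lambda>_. 0)), ((\<lambda>_. 0), y)}"
  shows "((\<lambda>_. 0), snd c) \<in> gen \<alpha> \<beta> {(x, (\<lambda>_. 0)), ((\<lambda>_. 0), y)}"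
  using assms
proof (induction rule: gen.induct)
  case gen_zero then show ?case using gen.gen_zero by (simp add: wzero_def)
next
  case (gen_base s) then show ?case
    using gen.gen_zero gen.gen_base by (auto simp: wzero_def)
next
  case (gen_add c d)
  have "wadd ((\<lambda>_. 0), snd c) ((\<lambda>_. 0), snd d) \<in> gen \<alpha> \<beta> {(x, (\<lambda>_. 0)), ((\<lambda>_. 0), y)}"
    using gen_add by (blast intro: gen.gen_add)
  then show ?case by (simp add: wadd_def)
next
  case (gen_smul c p)
  have "smul \<alpha> \<beta> p ((\<lambda>_. 0), snd c) \<in> gen \<alpha> \<beta> {(x, (\<lambda>_. 0)), ((\<lambda>_. 0), y)}"
    using gen_smul by (blast intro: gen.gen_smul)
  moreover have "vpoly \<alpha> (\<lambda>_. 0::2) = 0" by (simp add: vpoly_def)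
  moreover have "cred \<alpha> (0::2 poly) = (\<lambda>_. 0)" by (simp add: cred_def fun_eq_iff)
  ultimately show ?case by (simp add: smul_def)
qed

theorem mainTheorem4:
  fixes \<alpha> \<beta> :: nat and f h g :: "4 poly" and b l :: "2 poly" and C :: "word set"
  assumes "\<alpha> \<ge> 1" and "odd \<beta>"
    and "f * h * g = monom 1 \<beta> - 1"
    and "b dvd monom 1 \<alpha> - 1"
    and C_def: "C = gen \<alpha> \<beta> {(cred \<alpha> b, (\<lambda>_. 0)), (cred \<alpha> l, cred \<beta> (f * h + 2 * f))}"
    and "{c \<in> C. wadd c c = wzero} = gen \<alpha> \<beta> {(cred \<alpha> b, (\<lambda>_. 0)), ((\<lambda>_. 0), cred \<beta> (2 * f))}"
  shows "lin2p (Phi \<beta> ` C) \<longleftrightarrow> lin2 (gray \<beta> ` (snd ` C))"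
proof
  assume L: "lin2p (Phi \<beta> ` C)"
  show "lin2 (gray \<beta> ` (snd ` C))"
    unfolding lin2_def
  proof (intro conjI ballI)
    have "wzero \<in> C" unfolding C_def by (rule gen.gen_zero)
    moreover have "gray \<beta> (snd wzero) = (\<lambda>_. 0)" by (simp add: wzero_def gray_def rh fun_eq_iff)
    ultimately show "(\<lambda>_. 0) \<in> gray \<beta> ` (snd ` C)" by force
  next
    fix x y assume "x \<in> gray \<beta> ` (snd ` C)" "y \<in> gray \<beta> ` (snd ` C)"
    then obtain u v where u: "u \<in> C" "x = gray \<beta> (snd u)" and v: "v \<in> C" "y = gray \<beta> (snd v)" by blast
    have "Phi \<beta> u \<in> Phi \<beta> ` C" "Phi \<beta> v \<in> Phi \<beta> ` C" using u v by auto
    then have "((\<lambda>i. fst (Phi \<beta> u) i + fst (Phi \<beta> v) i), (\<lambda>i. snd (Phi \<beta> u) i + snd (Phi \<beta> v) i)) \<in> Phi \<beta> ` C"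
      using L unfolding lin2p_def by blast
    then obtain w where "w \<in> C" "Phi \<beta> w = ((\<lambda>i. fst (Phi \<beta> u) i + fst (Phi \<beta> v) i), (\<lambda>i. snd (Phi \<beta> u) i + snd (Phi \<beta> v) i))" by force
    then have "w \<in> C" "gray \<beta> (snd w) = (\<lambda>i. x i + y i)" using u v by (auto simp: Phi_def)
    then show "(\<lambda>i. x i + y i) \<in> gray \<beta> ` (snd ` C)" by force
  qed
next
  assume R: "lin2 (gray \<beta> ` (snd ` C))"
  have supp: "\<And>c. c \<in> C \<Longrightarrow> (\<forall>i\<ge>\<alpha>. fst c i = 0) \<and> (\<forall>i\<ge>\<beta>. snd c i = 0)"
    unfolding C_def by (erule gen_supp) (auto simp: cred_supp)
  show "lin2p (Phi \<beta> ` C)"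
    unfolding lin2p_def
  proof (intro conjI ballI)
    have "wzero \<in> C" unfolding C_def by (rule gen.gen_zero)
    moreover have "Phi \<beta> wzero = ((\<lambda>_. 0), (\<lambda>_. 0))" by (simp add: Phi_def wzero_def gray_def rh fun_eq_iff)
    ultimately show "((\<lambda>_. 0), (\<lambda>_. 0)) \<in> Phi \<beta> ` C" by force
  next
    fix x y assume "x \<in> Phi \<beta> ` C" "y \<in> Phi \<beta> ` C"
    then obtain u v where u: "u \<in> C" "x = Phi \<beta> u" and v: "v \<in> C" "y = Phi \<beta> v" by blast
    have "gray \<beta> (snd u) \<in> gray \<beta> ` (snd ` C)" "gray \<beta> (snd v) \<in> gray \<beta> ` (snd ` C)" using u v by auto
    then have "(\<lambda>i. gray \<beta> (snd u) i + gray \<beta> (snd v) i) \<in> gray \<beta> ` (snd ` C)"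
      using R unfolding lin2_def by blast
    then obtain w where w: "w \<in> C" "gray \<beta> (snd w) = (\<lambda>i. gray \<beta> (snd u) i + gray \<beta> (snd v) i)" by force
    define z where "z = wadd w (wadd (wadd u (wadd u u)) (wadd v (wadd v v)))"
    have zC: "z \<in> C" unfolding z_def using u v w unfolding C_def by (blast intro: gen.gen_add)
    have snz: "snd z = (\<lambda>i. snd w i + snd u i + snd u i + snd u i + (snd v i + snd v i + snd v i))"
      by (simp add: z_def wadd_def fun_eq_iff algebra_simps)
    have two: "2 * snd z i = 0" for i
    proof (cases "i < \<beta>")
      case True
      have g: "gray \<beta> (snd w) i = gray \<beta> (snd u) i + gray \<beta> (snd v) i"
              "gray \<beta> (snd w) (i + \<beta>) = gray \<beta> (snd u) (i + \<beta>) + gray \<beta> (snd v) (i + \<beta>)"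
        using w(2) by (simp_all add: fun_eq_iff)
      then have "hat4 (snd w i) = hat4 (snd u i) + hat4 (snd v i)"
        "red2 (snd w i) + hat4 (snd w i) = red2 (snd u i) + hat4 (snd u i) + red2 (snd v i) + hat4 (snd v i)"
        using True by (simp_all add: gray_def algebra_simps)
      then show ?thesis unfolding snz by (rule key)
    next
      case False
      then show ?thesis using supp[OF u(1)] supp[OF v(1)] supp[OF w(1)] unfolding snz by simp
    qed
    have "wadd z z = wzero"
      unfolding wadd_def wzero_def using two
      by (simp add: fun_eq_iff two2 mult_2[symmetric])
    then have "z \<in> gen \<alpha> \<beta> {(cred \<alpha> b, (\<lambda>_. 0)), ((\<lambda>_. 0), cred \<beta> (2 * f))}"
      using zC assms(6) by blast
    then have "((\<lambda>_. 0), snd z) \<in> gen \<alpha> \<beta> {(cred \<alpha> b, (\<lambda>_. 0)), ((\<lambda>_. 0), cred \<beta> (2 * f))}"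
      by (rule gen_zero_fst)
    then have t: "((\<lambda>_. 0), snd z) \<in> C" using assms(6) by blast
    define e where "e = wadd (wadd u v) ((\<lambda>_. 0), snd z)"
    have eC: "e \<in> C" unfolding e_def using u v t unfolding C_def by (blast intro: gen.gen_add)
    have "snd e = snd w"
      by (simp add: e_def snz wadd_def fun_eq_iff algebra_simps four4)
    then have "Phi \<beta> e = ((\<lambda>i. fst x i + fst y i), (\<lambda>i. snd x i + snd y i))"
      using w(2) u(2) v(2) by (simp add: Phi_def e_def wadd_def fun_eq_iff)
    then show "((\<lambda>i. fst x i + fst y i), (\<lambda>i. snd x i + snd y i)) \<in> Phi \<beta> ` C"
      using eC by force
  qed
qed

end
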